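(* Consider the following algorithm (first-visit Monte Carlo policy evaluation with $H$-step lookahead). Fix integers $m\ge1$, $H\ge1$, an initial vector $V_0\in\mathbb{R}^{|\mathcal S|}$, and deterministic stepsizes $\gamma_k\in(0,1]$. At iteration $k\ge0$: let $\mu_{k+1}$ be a policy with $T_{\mu_{k+1}}T^{H-1}V_k=T^HV_k$; generate one trajectory of the Markov chain under $\mu_{k+1}$ whose initial state is drawn from a distribution $p$ on $\mathcal S$; let $\mathcal D_k$ be the set of states visited by the trajectory; for each $i\in\mathcal D_k$ obtain, from the portion of the trajectory starting at the first visit to $i$, an estimate $T^m_{\mu_{k+1}}T^{H-1}V_k(i)+w_k(i)$; and set $$V_{k+1}(i)=\begin{cases}(1-\gamma_k)V_k(i)+\gamma_k\big(T^m_{\mu_{k+1}}T^{H-1}V_k(i)+w_k(i)\big), & i\in\mathcal D_k,\\ V_k(i), & i\notin\mathcal D_k.\end{cases}$$ Assume: (a) $p(i)>0$ for all $i\in\mathcal S$; (b) $\alpha^{H-1}+2(1+\alpha^m)\frac{\alpha^{H-1}}{1-\alpha}<1$; (c) $\sum_k\gamma_k=\infty$ and $\sum_k\gamma_k^2<\infty$; and the noise satisfies $E[w_k(i)\mid\mathcal F_k, i\in\mathcal D_k]=0$ and $|w_k(i)|\le C$ almost surely for a constant $C$, where $\mathcal F_k$ is the history up to the start of iteration $k$. Then $V_k\to J^*$ almost surely.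
   Context: Finite Markov decision process with finite state space $\mathcal S$, finite action set $\mathcal A$, transition probabilities $P_{ij}(u)$, costs $g(i,u)\in[0,1]$, discount $\alpha\in(0,1)$. For a policy $\mu:\mathcal S\to\mathcal A$, $T_\mu J=g_\mu+\alpha P_\mu J$ with $g_\mu(i)=g(i,\mu(i))$, $(P_\mu)_{ij}=P_{ij}(\mu(i))$; $T^m_\mu$ is the $m$-fold composition (an $m$-step rollout). $(TJ)(i)=\min_u\big[g(i,u)+\alpha\sum_jP_{ij}(u)J(j)\big]$ with fixed point $J^*$ (the optimal value function). The quantity $T^m_{\mu_{k+1}}T^{H-1}V_k(i)+w_k(i)$ is a sampled return whose conditional mean is $T^m_{\mu_{k+1}}T^{H-1}V_k(i)$. *)

theory Defs
  imports "HOL-Probability.Probability"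
begin

definition mdp :: "('s::finite \<Rightarrow> 'a::finite \<Rightarrow> 's \<Rightarrow> real) \<Rightarrow> ('s \<Rightarrow> 'a \<Rightarrow> real) \<Rightarrow> real \<Rightarrow> bool" where
  "mdp P g \<alpha> \<longleftrightarrow> (\<forall>i u j. 0 \<le> P i u j) \<and> (\<forall>i u. (\<Sum>j\<in>UNIV. P i u j) = 1)
     \<and> (\<forall>i u. 0 \<le> g i u \<and> g i u \<le> 1) \<and> 0 < \<alpha> \<and> \<alpha> < 1"

definition Tmu :: "('s::finite \<Rightarrow> 'a \<Rightarrow> 's \<Rightarrow> real) \<Rightarrow> ('s \<Rightarrow> 'a \<Rightarrow> real) \<Rightarrow> real
    \<Rightarrow> ('s \<Rightarrow> 'a) \<Rightarrow> ('s \<Rightarrow> real) \<Rightarrow> ('s \<Rightarrow> real)" where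
  "Tmu P g \<alpha> \<mu> J = (\<lambda>i. g i (\<mu> i) + \<alpha> * (\<Sum>j\<in>UNIV. P i (\<mu> i) j * J j))"

definition Tbell :: "('s::finite \<Rightarrow> 'a::finite \<Rightarrow> 's \<Rightarrow> real) \<Rightarrow> ('s \<Rightarrow> 'a \<Rightarrow> real) \<Rightarrow> real
    \<Rightarrow> ('s \<Rightarrow> real) \<Rightarrow> ('s \<Rightarrow> real)" where
  "Tbell P g \<alpha> J = (\<lambda>i. Min ((\<lambda>u. g i u + \<alpha> * (\<Sum>j\<in>UNIV. P i u j * J j)) ` UNIV))"

definition Jstar :: "('s::finite \<Rightarrow> 'a::finite \<Rightarrow> 's \<Rightarrow> real) \<Rightarrow> ('s \<Rightarrow> 'a \<Rightarrow> real) \<Rightarrow> real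
    \<Rightarrow> ('s \<Rightarrow> real)" where
  "Jstar P g \<alpha> = (THE J. Tbell P g \<alpha> J = J)"

end

theory Submission
  imports Defs
begin


lemma Min_lip:
  fixes f h :: "'a::finite \<Rightarrow> real"
  assumes "\<And>u. \<bar>f u - h u\<bar> \<le> d"
  shows "\<bar>Min (f ` UNIV) - Min (h ` UNIV)\<bar> \<le> d"
proof -
  have "Min (f ` UNIV) \<in> f ` UNIV" by (rule Min_in) auto
  then obtain uf where uf: "Min (f ` UNIV) = f uf" by blast
  have "Min (h ` UNIV) \<in> h ` UNIV" by (rule Min_in) auto
  then obtain uh where uh: "Min (h ` UNIV) = h uh" by blast
  have "Min (f ` UNIV) \<le> f uh" by simp
  moreover have "Min (h ` UNIV) \<le> h uf" by simp
  ultimately show ?thesis using assms[of uf] assms[of uh] uf uh by (auto simp: abs_le_iff)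
qed

lemma affine_lip:
  fixes X Y :: "'s::finite \<Rightarrow> real"
  assumes mdp: "mdp P g \<alpha>" and d: "\<And>j. \<bar>X j - Y j\<bar> \<le> d"
  shows "\<bar>(g i u + \<alpha> * (\<Sum>j\<in>UNIV. P i u j * X j)) - (g i u + \<alpha> * (\<Sum>j\<in>UNIV. P i u j * Y j))\<bar> \<le> \<alpha> * d"
proof -
  have a: "0 < \<alpha>" and P0: "\<And>j. 0 \<le> P i u j" and P1: "(\<Sum>j\<in>UNIV. P i u j) = 1"
    using mdp by (auto simp: mdp_def)
  have "\<bar>(\<Sum>j\<in>UNIV. P i u j * X j) - (\<Sum>j\<in>UNIV. P i u j * Y j)\<bar> = \<bar>\<Sum>j\<in>UNIV. P i u j * (X j - Y j)\<bar>"
    by (simp add: sum_subtractf right_diff_distrib)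
  also have "\<dots> \<le> (\<Sum>j\<in>UNIV. \<bar>P i u j * (X j - Y j)\<bar>)" by (rule sum_abs)
  also have "\<dots> \<le> (\<Sum>j\<in>UNIV. P i u j * d)"
    by (rule sum_mono) (simp add: abs_mult P0 d mult_left_mono)
  also have "\<dots> = d" by (simp add: sum_distrib_right[symmetric] P1)
  finally have "\<bar>(\<Sum>j\<in>UNIV. P i u j * X j) - (\<Sum>j\<in>UNIV. P i u j * Y j)\<bar> \<le> d" .
  then have "\<alpha> * \<bar>(\<Sum>j\<in>UNIV. P i u j * X j) - (\<Sum>j\<in>UNIV. P i u j * Y j)\<bar> \<le> \<alpha> * d"
    using a by (simp add: mult_left_mono)
  then show ?thesis using a by (simp add: right_diff_distrib[symmetric] abs_mult)
qed

lemma Tbell_lip: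
  assumes mdp: "mdp P g \<alpha>" and d: "\<And>j. \<bar>X j - Y j\<bar> \<le> d"
  shows "\<bar>Tbell P g \<alpha> X i - Tbell P g \<alpha> Y i\<bar> \<le> \<alpha> * d"
  unfolding Tbell_def by (rule Min_lip) (rule affine_lip[OF mdp d])

lemma Tmu_lip:
  assumes mdp: "mdp P g \<alpha>" and d: "\<And>j. \<bar>X j - Y j\<bar> \<le> d"
  shows "\<bar>Tmu P g \<alpha> \<mu> X i - Tmu P g \<alpha> \<mu> Y i\<bar> \<le> \<alpha> * d"
  unfolding Tmu_def using affine_lip[OF mdp d, of i "\<mu> i"] by simp

lemma Tbell_pow_lip:
  fixes X Y :: "'s::finite \<Rightarrow> real" and P :: "'s \<Rightarrow> 'a::finite \<Rightarrow> 's \<Rightarrow> real"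
  assumes mdp: "mdp P g \<alpha>" and d: "\<And>j. \<bar>X j - Y j\<bar> \<le> d"
  shows "\<bar>(Tbell P g \<alpha> ^^ n) X i - (Tbell P g \<alpha> ^^ n) Y i\<bar> \<le> \<alpha> ^ n * d"
proof (induction n arbitrary: i)
  case 0 then show ?case using d by simp
next
  case (Suc n)
  show ?case using Tbell_lip[OF mdp Suc.IH, where i=i] by (simp add: mult.assoc)
qed

lemma Tbell_unique:
  assumes mdp: "mdp P g \<alpha>" and X: "Tbell P g \<alpha> X = X" and Y: "Tbell P g \<alpha> Y = Y"
  shows "X = Y"
proof -
  have a: "0 < \<alpha>" "\<alpha> < 1" using mdp by (auto simp: mdp_def)
  define d where "d = Max (range (\<lambda>j. \<bar>X j - Y j\<bar>))"
  have dj: "\<And>j. \<bar>X j - Y j\<bar> \<le> d" unfolding d_def by simp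
  have "d \<in> range (\<lambda>j. \<bar>X j - Y j\<bar>)" unfolding d_def by (rule Max_in) auto
  then obtain j0 where j0: "d = \<bar>X j0 - Y j0\<bar>" by auto
  have "\<bar>X j0 - Y j0\<bar> \<le> \<alpha> * d" using Tbell_lip[where X=X and Y=Y and d=d, OF mdp dj, where i=j0] X Y by simp
  then have "d \<le> \<alpha> * d" using j0 by simp
  then have "d \<le> 0" using a by (smt (verit) mult_le_cancel_right1)
  then show ?thesis using dj by (intro ext) (smt (verit))
qed

lemma Tbell_exists:
  assumes mdp: "mdp P g \<alpha>"
  shows "\<exists>J. Tbell P g \<alpha> J = J"
proof -
  have a: "0 < \<alpha>" "\<alpha> < 1" using mdp by (auto simp: mdp_def)
  let ?T = "Tbell P g \<alpha>"
  define x where "x n = (?T ^^ n) (\<lambda>_. 0)" for n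
  define c where "c = Max (range (\<lambda>j. \<bar>?T (\<lambda>_. 0) j\<bar>))"
  have c: "\<And>j. \<bar>x 1 j - x 0 j\<bar> \<le> c" unfolding c_def x_def by simp
  have diff: "\<bar>x (Suc n) j - x n j\<bar> \<le> \<alpha> ^ n * c" for n j
  proof -
    have "x (Suc n) = (?T ^^ n) (x 1)" unfolding x_def by (simp add: funpow_swap1)
    moreover have "x n = (?T ^^ n) (x 0)" unfolding x_def by simp
    ultimately show ?thesis using Tbell_pow_lip[OF mdp c] by simp
  qed
  have conv: "convergent (\<lambda>n. x n j)" for j
  proof -
    have "summable (\<lambda>n. \<alpha> ^ n * c)" using a by (simp add: summable_mult2)
    then have "summable (\<lambda>n. x (Suc n) j - x n j)"
      by (rule summable_comparison_test'[where N=0]) (use diff in auto)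
    then have "convergent (\<lambda>n. \<Sum>k<n. x (Suc k) j - x k j)"
      by (simp add: summable_iff_convergent)
    then have "convergent (\<lambda>n. x 0 j + (\<Sum>k<n. x (Suc k) j - x k j))"
      by (intro convergent_add convergent_const)
    then show ?thesis using sum_lessThan_telescope[of "\<lambda>k. x k j"] by simp
  qed
  define L where "L j = lim (\<lambda>n. x n j)" for j
  have xL: "(\<lambda>n. x n j) \<longlonglongrightarrow> L j" for j using conv unfolding L_def by (simp add: convergent_LIMSEQ_iff)
  have "?T L i = L i" for i
  proof -
    have "\<bar>?T L i - L i\<bar> \<le> \<alpha> * e" if e: "e > 0" for e
    proof -
      have "\<forall>\<^sub>F n in sequentially. \<forall>j. \<bar>x n j - L j\<bar> \<le> e"
      proof (rule eventually_all_finite)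
        fix j show "\<forall>\<^sub>F n in sequentially. \<bar>x n j - L j\<bar> \<le> e"
        proof -
          have "\<forall>\<^sub>F n in sequentially. \<bar>x n j - L j\<bar> < e"
            using xL[of j] e unfolding tendsto_iff dist_real_def by blast
          then show ?thesis by (rule eventually_mono) simp
        qed
      qed
      then have ev: "\<forall>\<^sub>F n in sequentially. \<bar>?T L i - x (Suc n) i\<bar> \<le> \<alpha> * e"
      proof (rule eventually_mono)
        fix n assume "\<forall>j. \<bar>x n j - L j\<bar> \<le> e"
        then have "\<And>j. \<bar>L j - x n j\<bar> \<le> e" by (simp add: abs_minus_commute)
        from Tbell_lip[where X=L and Y="x n" and d=e, OF mdp this, where i=i] show "\<bar>?T L i - x (Suc n) i\<bar> \<le> \<alpha> * e"
          unfolding x_def by simp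
      qed
      have "(\<lambda>n. \<bar>?T L i - x (Suc n) i\<bar>) \<longlonglongrightarrow> \<bar>?T L i - L i\<bar>"
        by (intro tendsto_intros LIMSEQ_Suc xL)
      then show ?thesis using ev by (rule tendsto_upperbound) simp
    qed
    then have "\<bar>?T L i - L i\<bar> \<le> 0 + e" if "e > 0" for e
      using a that by (smt (verit) mult_le_cancel_right1 mult.commute)
    then have "\<bar>?T L i - L i\<bar> \<le> 0" by (rule field_le_epsilon)
    then show ?thesis by simp
  qed
  then show ?thesis by auto
qed

lemma Jstar_fix:
  assumes mdp: "mdp P g \<alpha>"
  shows "Tbell P g \<alpha> (Jstar P g \<alpha>) = Jstar P g \<alpha>"
proof -
  obtain J where J: "Tbell P g \<alpha> J = J" using Tbell_exists[OF mdp] by blast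
  show ?thesis unfolding Jstar_def
    by (rule theI[of _ J]) (use J Tbell_unique[OF mdp] in auto)
qed

lemma Tbell_pow_fix:
  assumes "Tbell P g \<alpha> J = J" shows "(Tbell P g \<alpha> ^^ n) J = J"
  by (induction n) (simp_all add: assms)

lemma G_contr:
  fixes P :: "'s::finite \<Rightarrow> 'a::finite \<Rightarrow> 's \<Rightarrow> real"
  assumes mdp: "mdp P g \<alpha>" and m: "m \<ge> 1" and H: "H \<ge> 1"
    and greedy: "Tmu P g \<alpha> \<mu> ((Tbell P g \<alpha> ^^ (H - 1)) V) = (Tbell P g \<alpha> ^^ H) V"
    and d: "\<And>j. \<bar>V j - Jstar P g \<alpha> j\<bar> \<le> d"
  shows "\<bar>(Tmu P g \<alpha> \<mu> ^^ m) ((Tbell P g \<alpha> ^^ (H - 1)) V) i - Jstar P g \<alpha> i\<bar>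
           \<le> 2 * \<alpha> ^ H / (1 - \<alpha>) * d"
proof -
  have a: "0 < \<alpha>" "\<alpha> < 1" using mdp by (auto simp: mdp_def)
  define J where "J = Jstar P g \<alpha>"
  have TJ: "Tbell P g \<alpha> J = J" unfolding J_def by (rule Jstar_fix[OF mdp])
  define X where "X = (Tbell P g \<alpha> ^^ (H - 1)) V"
  define \<delta> where "\<delta> = \<alpha> ^ (H - 1) * d"
  have d0: "0 \<le> d" using d[of undefined] by linarith
  have \<delta>0: "0 \<le> \<delta>" unfolding \<delta>_def using a d0 by simp
  have dX: "\<bar>X j - J j\<bar> \<le> \<delta>" for j
    using Tbell_pow_lip[where X=V and Y=J and d=d, OF mdp d[unfolded J_def[symmetric]], where n="H - 1" and i=j]
    unfolding X_def \<delta>_def Tbell_pow_fix[OF TJ] by simp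
  have HS: "H = Suc (H - 1)" using H by simp
  have TmuX: "Tmu P g \<alpha> \<mu> X = Tbell P g \<alpha> X"
    using greedy unfolding X_def by (subst (asm) HS) simp
  have h1: "\<bar>Tmu P g \<alpha> \<mu> X j - J j\<bar> \<le> \<alpha> * \<delta>" for j
    using Tbell_lip[where X=X and Y=J and d=\<delta>, OF mdp dX, where i=j] TmuX TJ by simp
  have dX': "\<bar>J j - X j\<bar> \<le> \<delta>" for j using dX[of j] by (simp add: abs_minus_commute)
  have h2: "\<bar>Tmu P g \<alpha> \<mu> J j - J j\<bar> \<le> 2 * \<alpha> * \<delta>" for j
    using Tmu_lip[where X=J and Y=X and d=\<delta>, OF mdp dX', where i=j and \<mu>=\<mu>] h1[of j] by linarith
  define b where "b = 2 * \<alpha> * \<delta> / (1 - \<alpha>)"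
  have b1: "\<alpha> * \<delta> \<le> b" unfolding b_def using a \<delta>0 by (simp add: field_simps)
  have b2: "\<alpha> * b + 2 * \<alpha> * \<delta> = b" unfolding b_def using a by (simp add: field_simps)
  have claim: "\<bar>(Tmu P g \<alpha> \<mu> ^^ Suc k) X j - J j\<bar> \<le> b" for k j
  proof (induction k arbitrary: j)
    case 0 then show ?case using h1[of j] b1 by simp
  next
    case (Suc k)
    have "\<bar>Tmu P g \<alpha> \<mu> ((Tmu P g \<alpha> \<mu> ^^ Suc k) X) j - Tmu P g \<alpha> \<mu> J j\<bar> \<le> \<alpha> * b"
      by (rule Tmu_lip[OF mdp Suc.IH])
    then show ?case using h2[of j] b2 by simp
  qed
  have mS: "m = Suc (m - 1)" using m by simp
  have "\<bar>(Tmu P g \<alpha> \<mu> ^^ m) X i - J i\<bar> \<le> b" by (subst mS) (rule claim)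
  moreover have "b = 2 * \<alpha> ^ H / (1 - \<alpha>) * d"
    unfolding b_def \<delta>_def by (subst (2) HS) (simp add: field_simps)
  ultimately show ?thesis unfolding X_def J_def by simp
qed



lemma nonsum_big:
  fixes \<alpha> :: "nat \<Rightarrow> real"
  assumes a0: "\<And>n. 0 \<le> \<alpha> n" and ns: "\<not> summable \<alpha>"
  shows "\<exists>N. \<forall>n\<ge>N. K \<le> (\<Sum>k<n. \<alpha> k)"
proof (rule ccontr)
  assume "\<not> ?thesis"
  then have fr: "\<forall>N. \<exists>n\<ge>N. (\<Sum>k<n. \<alpha> k) < K" by (auto simp: not_le)
  have "(\<Sum>k<n. \<alpha> k) \<le> K" for n
  proof -
    obtain n' where "n' \<ge> n" "(\<Sum>k<n'. \<alpha> k) < K" using fr by blast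
    moreover have "(\<Sum>k<n. \<alpha> k) \<le> (\<Sum>k<n'. \<alpha> k)"
      using \<open>n' \<ge> n\<close> a0 by (intro sum_mono2) auto
    ultimately show ?thesis by simp
  qed
  then have "summable \<alpha>" by (rule summableI_nonneg_bounded[OF a0])
  with ns show False by simp
qed

lemma decay:
  fixes c \<alpha> :: "nat \<Rightarrow> real"
  assumes a: "\<And>n. 0 \<le> \<alpha> n \<and> \<alpha> n \<le> 1" and ns: "\<not> summable \<alpha>"
    and rec: "\<And>n. n \<ge> nst \<Longrightarrow> c (Suc n) \<le> (1 - \<alpha> n) * c n + \<alpha> n * b"
    and e: "\<epsilon> > 0"
  shows "\<forall>\<^sub>F n in sequentially. c n \<le> b + \<epsilon>"
proof -
  define d where "d n = max (c n - b) 0" for n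
  define A where "A n = (\<Sum>k<n. \<alpha> k)" for n
  have dstep: "d (Suc n) \<le> (1 - \<alpha> n) * d n" if "n \<ge> nst" for n
  proof -
    have "c (Suc n) - b \<le> (1 - \<alpha> n) * (c n - b)" using rec[OF that] by (simp add: algebra_simps)
    also have "\<dots> \<le> (1 - \<alpha> n) * d n" using a[of n] unfolding d_def
      by (intro mult_left_mono) auto
    finally show ?thesis unfolding d_def using a[of n] by (simp add: mult_nonneg_nonneg)
  qed
  have dbound: "d (nst + k) \<le> d nst * exp (A nst - A (nst + k))" for k
  proof (induction k)
    case 0 then show ?case by simp
  next
    case (Suc k)
    have "d (nst + Suc k) \<le> (1 - \<alpha> (nst + k)) * d (nst + k)" using dstep[of "nst + k"] by simp
    also have "\<dots> \<le> exp (- \<alpha> (nst + k)) * d (nst + k)"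
      using a[of "nst+k"] exp_ge_add_one_self[of "- \<alpha> (nst + k)"] unfolding d_def
      by (intro mult_right_mono) auto
    also have "\<dots> \<le> exp (- \<alpha> (nst + k)) * (d nst * exp (A nst - A (nst + k)))"
      using Suc.IH by (intro mult_left_mono) auto
    also have "\<dots> = d nst * exp (- \<alpha> (nst + k) + (A nst - A (nst + k)))"
      by (simp only: exp_add mult_ac)
    also have "\<dots> = d nst * exp (A nst - A (nst + Suc k))"
      unfolding A_def by (simp add: algebra_simps)
    finally show ?case .
  qed
  have d0: "0 \<le> d nst" unfolding d_def by simp
  obtain N where N: "\<And>n. n \<ge> N \<Longrightarrow> A nst + ln ((d nst + 1) / \<epsilon>) \<le> A n"
    using nonsum_big[of \<alpha> "A nst + ln ((d nst + 1) / \<epsilon>)"] a ns unfolding A_def by blast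
  have "c n \<le> b + \<epsilon>" if n: "n \<ge> max N nst" for n
  proof -
    obtain k where k: "n = nst + k" using n by (metis le_add_diff_inverse max.bounded_iff)
    have "A nst - A n \<le> - ln ((d nst + 1) / \<epsilon>)" using N[of n] n by simp
    then have "exp (A nst - A n) \<le> exp (- ln ((d nst + 1) / \<epsilon>))" by simp
    also have "\<dots> = \<epsilon> / (d nst + 1)" using e d0 by (simp add: exp_minus)
    finally have "d n \<le> d nst * (\<epsilon> / (d nst + 1))"
      using dbound[of k] k d0 by (smt (verit) mult_left_mono)
    also have "\<dots> \<le> \<epsilon>" using d0 e by (simp add: field_simps)
    finally show ?thesis unfolding d_def by simp
  qed
  then show ?thesis unfolding eventually_sequentially by blast
qed

lemma noise_vanish:
  fixes u x \<alpha> :: "nat \<Rightarrow> real"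
  assumes a: "\<And>n. 0 \<le> \<alpha> n \<and> \<alpha> n \<le> 1" and ns: "\<not> summable \<alpha>"
    and rec: "\<And>n. u (Suc n) = (1 - \<alpha> n) * u n + x n"
    and conv: "convergent (\<lambda>n. \<Sum>k<n. x k)"
  shows "u \<longlonglongrightarrow> 0"
proof -
  obtain S where S: "(\<lambda>n. \<Sum>k<n. x k) \<longlonglongrightarrow> S" using conv by (auto simp: convergent_def)
  define r where "r n = (\<Sum>k<n. x k) - S" for n
  have r0: "r \<longlonglongrightarrow> 0" unfolding r_def using S by (simp add: LIM_zero)
  define v where "v n = u n - r n" for n
  have vrec: "v (Suc n) = (1 - \<alpha> n) * v n - \<alpha> n * r n" for n
    unfolding v_def r_def using rec[of n] by (simp add: algebra_simps)
  show ?thesis unfolding tendsto_iff dist_real_def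
  proof (intro allI impI)
    fix e :: real assume e: "e > 0"
    have "\<forall>\<^sub>F n in sequentially. \<bar>r n\<bar> < e / 4"
      using r0 e unfolding tendsto_iff dist_real_def by (auto dest: spec[of _ "e/4"])
    then obtain nst where nst: "\<And>n. n \<ge> nst \<Longrightarrow> \<bar>r n\<bar> < e / 4" by (auto simp: eventually_sequentially)
    have "\<forall>\<^sub>F n in sequentially. \<bar>v n\<bar> \<le> e/4 + e/4"
    proof (rule decay[OF a ns])
      fix n assume "n \<ge> nst"
      then have "\<alpha> n * \<bar>r n\<bar> \<le> \<alpha> n * (e/4)" using a[of n] nst[of n] by (intro mult_left_mono) auto
      moreover have "\<bar>v (Suc n)\<bar> \<le> (1 - \<alpha> n) * \<bar>v n\<bar> + \<alpha> n * \<bar>r n\<bar>"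
      proof -
        have "\<bar>v (Suc n)\<bar> \<le> \<bar>(1 - \<alpha> n) * v n\<bar> + \<bar>\<alpha> n * r n\<bar>"
          unfolding vrec by (rule abs_triangle_ineq4)
        also have "\<dots> = (1 - \<alpha> n) * \<bar>v n\<bar> + \<alpha> n * \<bar>r n\<bar>"
          using a[of n] by (simp add: abs_mult)
        finally show ?thesis .
      qed
      ultimately show "\<bar>v (Suc n)\<bar> \<le> (1 - \<alpha> n) * \<bar>v n\<bar> + \<alpha> n * (e / 4)" by linarith
    qed (use e in simp)
    moreover have "\<forall>\<^sub>F n in sequentially. \<bar>r n\<bar> < e / 4" using nst eventually_sequentially by blast
    ultimately show "\<forall>\<^sub>F n in sequentially. \<bar>u n - 0\<bar> < e"
      proof eventually_elim
      case (elim n) then show ?case unfolding v_def using e by arith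
    qed
  qed
qed

lemma det_conv:
  fixes e a gg w :: "nat \<Rightarrow> 's::finite \<Rightarrow> real" and \<beta> C :: real
  assumes \<beta>: "0 \<le> \<beta>" "\<beta> < 1"
    and a: "\<And>k i. 0 \<le> a k i \<and> a k i \<le> 1"
    and ns: "\<And>i. \<not> summable (\<lambda>k. a k i)"
    and nc: "\<And>i. convergent (\<lambda>n. \<Sum>k<n. a k i * w k i)"
    and wb: "\<And>k i. \<bar>a k i * w k i\<bar> \<le> a k i * C"
    and rec: "\<And>k i. e (Suc k) i = (1 - a k i) * e k i + a k i * (gg k i + w k i)"
    and gb: "\<And>k d i. (\<And>j. \<bar>e k j\<bar> \<le> d) \<Longrightarrow> \<bar>gg k i\<bar> \<le> \<beta> * d"
  shows "(\<lambda>k. e k i) \<longlonglongrightarrow> 0"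
proof -
  define B where "B = max (Max (range (\<lambda>j. \<bar>e 0 j\<bar>))) (C / (1 - \<beta>))"
  have BC: "C \<le> (1 - \<beta>) * B"
  proof -
    have "C / (1 - \<beta>) \<le> B" unfolding B_def by simp
    then show ?thesis using \<beta> by (simp add: field_simps)
  qed
  have bnd: "\<bar>e k j\<bar> \<le> B" for k j
  proof (induction k arbitrary: j)
    case 0 then show ?case unfolding B_def by (simp add: le_max_iff_disj)
  next
    case (Suc k)
    have g: "\<bar>gg k j\<bar> \<le> \<beta> * B" by (rule gb) (rule Suc.IH)
    have "\<bar>e (Suc k) j\<bar> \<le> (1 - a k j) * \<bar>e k j\<bar> + a k j * \<bar>gg k j\<bar> + \<bar>a k j * w k j\<bar>"
    proof -
      have "e (Suc k) j = (1 - a k j) * e k j + a k j * gg k j + a k j * w k j"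
        unfolding rec by (simp add: algebra_simps)
      also have "\<bar>\<dots>\<bar> \<le> \<bar>(1 - a k j) * e k j\<bar> + \<bar>a k j * gg k j\<bar> + \<bar>a k j * w k j\<bar>"
        by (meson abs_triangle_ineq add_mono order_trans order_refl)
      also have "\<dots> = (1 - a k j) * \<bar>e k j\<bar> + a k j * \<bar>gg k j\<bar> + \<bar>a k j * w k j\<bar>"
        using a[of k j] by (simp add: abs_mult)
      finally show ?thesis .
    qed
    also have "\<dots> \<le> (1 - a k j) * B + a k j * (\<beta> * B) + a k j * C"
      using a[of k j] Suc.IH[of j] g wb[of k j]
      by (intro add_mono mult_left_mono) auto
    also have "\<dots> \<le> B"
    proof -
      have "a k j * C \<le> a k j * ((1 - \<beta>) * B)" using a[of k j] BC by (intro mult_left_mono) auto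
      then show ?thesis by (simp add: algebra_simps)
    qed
    finally show ?case .
  qed
  define \<rho> where "\<rho> = (1 + \<beta>) / 2"
  have \<rho>: "0 < \<rho>" "\<rho> < 1" unfolding \<rho>_def using \<beta> by auto
  have shrink: "\<forall>\<^sub>F k in sequentially. \<forall>j. \<bar>e k j\<bar> \<le> \<rho> * D"
    if D: "D > 0" and ev: "\<forall>\<^sub>F k in sequentially. \<forall>j. \<bar>e k j\<bar> \<le> D" for D
  proof (rule eventually_all_finite)
    fix i
    obtain k0 where k0: "\<And>k j. k \<ge> k0 \<Longrightarrow> \<bar>e k j\<bar> \<le> D" using ev by (auto simp: eventually_sequentially)
    define \<epsilon> where "\<epsilon> = (1 - \<beta>) * D / 4"
    have \<epsilon>: "\<epsilon> > 0" unfolding \<epsilon>_def using \<beta> D by simp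
    define u where "u = rec_nat 0 (\<lambda>n un. (1 - a (n + k0) i) * un + a (n + k0) i * w (n + k0) i)"
    have u0: "u 0 = 0" and uS: "\<And>n. u (Suc n) = (1 - a (n + k0) i) * u n + a (n + k0) i * w (n + k0) i"
      unfolding u_def by simp_all
    define Z where "Z n = e (n + k0) i - u n" for n
    have ZS: "Z (Suc n) = (1 - a (n + k0) i) * Z n + a (n + k0) i * gg (n + k0) i" for n
      unfolding Z_def uS using rec[of "n + k0" i] by (simp add: algebra_simps)
    have nsh: "\<not> summable (\<lambda>n. a (n + k0) i)" using ns[of i] summable_iff_shift[of "\<lambda>k. a k i" k0] by simp
    have ah: "\<And>n. 0 \<le> a (n + k0) i \<and> a (n + k0) i \<le> 1" using a by blast
    have evZ: "\<forall>\<^sub>F n in sequentially. \<bar>Z n\<bar> \<le> \<beta> * D + \<epsilon>"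
    proof (rule decay[where nst=0, OF ah nsh _ \<epsilon>])
      fix n
      have g: "\<bar>gg (n + k0) i\<bar> \<le> \<beta> * D" by (rule gb) (rule k0, simp)
      have "\<bar>Z (Suc n)\<bar> \<le> (1 - a (n + k0) i) * \<bar>Z n\<bar> + a (n + k0) i * \<bar>gg (n + k0) i\<bar>"
      proof -
        have "\<bar>Z (Suc n)\<bar> \<le> \<bar>(1 - a (n + k0) i) * Z n\<bar> + \<bar>a (n + k0) i * gg (n + k0) i\<bar>"
          unfolding ZS by (rule abs_triangle_ineq)
        then show ?thesis using ah[of n] by (simp add: abs_mult)
      qed
      also have "\<dots> \<le> (1 - a (n + k0) i) * \<bar>Z n\<bar> + a (n + k0) i * (\<beta> * D)"
        using ah[of n] g by (intro add_mono mult_left_mono) auto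
      finally show "\<bar>Z (Suc n)\<bar> \<le> (1 - a (n + k0) i) * \<bar>Z n\<bar> + a (n + k0) i * (\<beta> * D)" .
    qed
    have "summable (\<lambda>k. a k i * w k i)" using nc[of i] by (simp add: summable_iff_convergent)
    then have "summable (\<lambda>n. a (n + k0) i * w (n + k0) i)"
      using summable_iff_shift[of "\<lambda>k. a k i * w k i" k0] by simp
    then have "convergent (\<lambda>n. \<Sum>k<n. a (k + k0) i * w (k + k0) i)" by (simp add: summable_iff_convergent)
    then have "u \<longlonglongrightarrow> 0" by (rule noise_vanish[OF ah nsh uS])
    then have evu: "\<forall>\<^sub>F n in sequentially. \<bar>u n\<bar> < \<epsilon>"
      using \<epsilon> unfolding tendsto_iff dist_real_def by auto
    have "\<forall>\<^sub>F n in sequentially. \<bar>e (n + k0) i\<bar> \<le> \<rho> * D"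
      using evZ evu
    proof eventually_elim
      case (elim n)
      have "\<beta> * D + 2 * \<epsilon> = \<rho> * D" unfolding \<epsilon>_def \<rho>_def by (simp add: field_simps)
      then show ?case using elim unfolding Z_def by arith
    qed
    then obtain N where N: "\<And>n. n \<ge> N \<Longrightarrow> \<bar>e (n + k0) i\<bar> \<le> \<rho> * D" by (auto simp: eventually_sequentially)
    show "\<forall>\<^sub>F k in sequentially. \<bar>e k i\<bar> \<le> \<rho> * D"
      unfolding eventually_sequentially
    proof (intro exI allI impI)
      fix k assume "k \<ge> N + k0"
      then show "\<bar>e k i\<bar> \<le> \<rho> * D" using N[of "k - k0"] by simp
    qed
  qed
  have B0: "0 \<le> B" using bnd[of 0 i] by linarith
  have lev: "\<forall>\<^sub>F k in sequentially. \<forall>j. \<bar>e k j\<bar> \<le> \<rho> ^ n * (B + 1)" for n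
  proof (induction n)
    case 0
    have "\<forall>k j. \<bar>e k j\<bar> \<le> B + 1"
    proof (intro allI)
      fix k j show "\<bar>e k j\<bar> \<le> B + 1" using bnd[of k j] by linarith
    qed
    then show ?case by simp
  next
    case (Suc n)
    have "\<forall>\<^sub>F k in sequentially. \<forall>j. \<bar>e k j\<bar> \<le> \<rho> * (\<rho> ^ n * (B + 1))"
      by (rule shrink[OF _ Suc.IH]) (use \<rho> B0 in simp)
    then show ?case by (simp add: mult.assoc)
  qed
  show ?thesis unfolding tendsto_iff dist_real_def
  proof (intro allI impI)
    fix \<epsilon> :: real assume \<epsilon>: "\<epsilon> > 0"
    have "(\<lambda>n. \<rho> ^ n * (B + 1)) \<longlonglongrightarrow> 0 * (B + 1)"
      using \<rho> by (intro tendsto_intros) simp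
    then have "\<forall>\<^sub>F n in sequentially. \<rho> ^ n * (B + 1) < \<epsilon>"
      using \<epsilon> unfolding tendsto_iff dist_real_def using \<rho> B0 by auto
    then obtain n where n: "\<rho> ^ n * (B + 1) < \<epsilon>" by (auto simp: eventually_sequentially)
    show "\<forall>\<^sub>F k in sequentially. \<bar>e k i - 0\<bar> < \<epsilon>"
      using lev[of n] by eventually_elim (use n in \<open>auto intro: le_less_trans\<close>)
  qed
qed



locale mart = prob_space M for M :: "'w measure" +
  fixes F :: "nat \<Rightarrow> 'w measure" and x :: "nat \<Rightarrow> 'w \<Rightarrow> real" and c :: "nat \<Rightarrow> real"
  assumes sub: "\<And>k. subalgebra M (F k)" and fmono: "\<And>k. subalgebra (F (Suc k)) (F k)"
    and xm: "\<And>k. x k \<in> borel_measurable (F (Suc k))"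
    and xb: "\<And>k. AE \<omega> in M. \<bar>x k \<omega>\<bar> \<le> c k"
    and ce: "\<And>k. AE \<omega> in M. real_cond_exp M (F k) (x k) \<omega> = 0"
begin

lemma sub_le: "j \<le> l \<Longrightarrow> subalgebra (F l) (F j)"
proof (induction l rule: dec_induct)
  case base then show ?case by (simp add: subalgebra_def)
next
  case (step l) then show ?case using fmono[of l] by (auto simp: subalgebra_def)
qed

lemma meas_up: "f \<in> borel_measurable (F j) \<Longrightarrow> j \<le> l \<Longrightarrow> f \<in> borel_measurable (F l)"
  using measurable_from_subalg[OF sub_le] by blast

lemma meas_M: "f \<in> borel_measurable (F j) \<Longrightarrow> f \<in> borel_measurable M"
  using measurable_from_subalg[OF sub] by blast

lemma xM[measurable]: "x k \<in> borel_measurable M" using meas_M[OF xm] .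

definition S :: "nat \<Rightarrow> 'w \<Rightarrow> real" where "S n \<omega> = (\<Sum>k<n. x k \<omega>)"

lemma SF: "S n \<in> borel_measurable (F n)"
  unfolding S_def
proof (rule borel_measurable_sum)
  fix k assume "k \<in> {..<n}" then show "x k \<in> borel_measurable (F n)" by (intro meas_up[OF xm]) auto
qed

lemma SM[measurable]: "S n \<in> borel_measurable M" using meas_M[OF SF] .

lemma c0: "0 \<le> c k"
proof (rule ccontr)
  assume "\<not> 0 \<le> c k"
  note neg = this
  from xb[of k] have "AE \<omega> in M. False" by eventually_elim (use neg in linarith)
  then show False by (simp add: AE_False)
qed

lemma xb_all: "AE \<omega> in M. \<forall>k. \<bar>x k \<omega>\<bar> \<le> c k" using xb by (simp add: AE_all_countable)

lemma Sbound: "AE \<omega> in M. \<forall>n. \<bar>S n \<omega>\<bar> \<le> (\<Sum>k<n. c k)"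
  using xb_all
proof eventually_elim
  case (elim \<omega>)
  show ?case
  proof
    fix n have "\<bar>S n \<omega>\<bar> \<le> (\<Sum>k<n. \<bar>x k \<omega>\<bar>)" unfolding S_def by (rule sum_abs)
    also have "\<dots> \<le> (\<Sum>k<n. c k)" using elim by (intro sum_mono) auto
    finally show "\<bar>S n \<omega>\<bar> \<le> (\<Sum>k<n. c k)" .
  qed
qed

lemma bint:
  fixes f :: "'w \<Rightarrow> real"
  assumes "f \<in> borel_measurable M" "AE \<omega> in M. \<bar>f \<omega>\<bar> \<le> K"
  shows "integrable M f"
  by (rule integrable_const_bound[OF _ assms(1), where B=K]) (use assms(2) in simp)

lemma orth:
  assumes Y: "Y \<in> borel_measurable (F l)" and Yb: "AE \<omega> in M. \<bar>Y \<omega>\<bar> \<le> K"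
  shows "(\<integral>\<omega>. Y \<omega> * x l \<omega> \<partial>M) = 0"
proof -
  interpret s: sigma_finite_subalgebra M "F l"
    by (rule finite_measure_subalgebra_is_sigma_finite)
       (simp add: finite_measure_subalgebra_def finite_measure_subalgebra_axioms_def finite_measure_axioms sub)
  have YM[measurable]: "Y \<in> borel_measurable M" using meas_M[OF Y] .
  have int: "integrable M (\<lambda>\<omega>. Y \<omega> * x l \<omega>)"
  proof (rule bint)
    show "AE \<omega> in M. \<bar>Y \<omega> * x l \<omega>\<bar> \<le> K * c l"
      using Yb xb[of l] by eventually_elim (simp add: abs_mult mult_mono)
  qed measurable
  have "(\<integral>\<omega>. Y \<omega> * x l \<omega> \<partial>M) = (\<integral>\<omega>. Y \<omega> * real_cond_exp M (F l) (x l) \<omega> \<partial>M)"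
    by (rule s.real_cond_exp_intg(2)[symmetric]) (use int Y in auto)
  also have "\<dots> = (\<integral>\<omega>. 0 \<partial>M)"
  proof (rule integral_cong_AE)
    show "AE \<omega> in M. Y \<omega> * real_cond_exp M (F l) (x l) \<omega> = 0"
      using ce[of l] by eventually_elim simp
  qed measurable
  finally show ?thesis by simp
qed


lemma S_Suc: "S (Suc N) \<omega> = S N \<omega> + x N \<omega>" unfolding S_def by simp

lemma Sdiff_bound: "AE \<omega> in M. \<forall>N n. \<bar>S N \<omega> - S n \<omega>\<bar> \<le> (\<Sum>k<N. c k) + (\<Sum>k<n. c k)"
  using Sbound by eventually_elim (metis abs_triangle_ineq4 add_mono order_trans)

lemma SF_le: "i \<le> j \<Longrightarrow> S i \<in> borel_measurable (F j)" using meas_up[OF SF] .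

lemma sq:
  assumes "n \<le> N"
  shows "(\<integral>\<omega>. (S N \<omega> - S n \<omega>)^2 \<partial>M) \<le> (\<Sum>k\<in>{n..<N}. (c k)^2)"
  using assms
proof (induction N rule: dec_induct)
  case base then show ?case by simp
next
  case (step N)
  let ?K = "(\<Sum>k<N. c k) + (\<Sum>k<n. c k)"
  have eq: "(\<lambda>\<omega>. (S (Suc N) \<omega> - S n \<omega>)^2)
      = (\<lambda>\<omega>. ((S N \<omega> - S n \<omega>)^2 + 2 * ((S N \<omega> - S n \<omega>) * x N \<omega>)) + (x N \<omega>)^2)"
    by (simp add: S_Suc power2_eq_square algebra_simps)
  have i1: "integrable M (\<lambda>\<omega>. (S N \<omega> - S n \<omega>)^2)"
  proof (rule bint)
    show "AE \<omega> in M. \<bar>(S N \<omega> - S n \<omega>)^2\<bar> \<le> ?K^2"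
      using Sdiff_bound
    proof eventually_elim
      case (elim \<omega>)
      have "\<bar>S N \<omega> - S n \<omega>\<bar> \<le> ?K" using elim by blast
      then have "\<bar>S N \<omega> - S n \<omega>\<bar>^2 \<le> ?K^2" by (rule power_mono) simp
      then show ?case by simp
    qed
  qed measurable
  have i2: "integrable M (\<lambda>\<omega>. (S N \<omega> - S n \<omega>) * x N \<omega>)"
  proof (rule bint)
    show "AE \<omega> in M. \<bar>(S N \<omega> - S n \<omega>) * x N \<omega>\<bar> \<le> ?K * c N"
      using Sdiff_bound xb[of N]
    proof eventually_elim
      case (elim \<omega>)
      have "\<bar>S N \<omega> - S n \<omega>\<bar> \<le> ?K" using elim(1) by blast
      then show ?case using elim(2) c0[of N] by (simp add: abs_mult mult_mono)
    qed
  qed measurable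
  have i3: "integrable M (\<lambda>\<omega>. (x N \<omega>)^2)"
  proof (rule bint)
    show "AE \<omega> in M. \<bar>(x N \<omega>)^2\<bar> \<le> (c N)^2"
      using xb[of N] by eventually_elim (use c0[of N] in \<open>simp add: abs_le_square_iff[symmetric]\<close>)
  qed measurable
  have o: "(\<integral>\<omega>. (S N \<omega> - S n \<omega>) * x N \<omega> \<partial>M) = 0"
  proof (rule orth)
    show "(\<lambda>\<omega>. S N \<omega> - S n \<omega>) \<in> borel_measurable (F N)"
      using SF_le[of N N] SF_le[of n N] step.hyps by measurable
    show "AE \<omega> in M. \<bar>S N \<omega> - S n \<omega>\<bar> \<le> ?K" using Sdiff_bound by eventually_elim simp
  qed
  have x2: "(\<integral>\<omega>. (x N \<omega>)^2 \<partial>M) \<le> (c N)^2"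
  proof -
    have "(\<integral>\<omega>. (x N \<omega>)^2 \<partial>M) \<le> (\<integral>\<omega>. (c N)^2 \<partial>M)"
    proof (rule integral_mono_AE[OF i3])
      show "AE \<omega> in M. (x N \<omega>)^2 \<le> (c N)^2"
        using xb[of N] by eventually_elim (use c0[of N] in \<open>simp add: abs_le_square_iff[symmetric]\<close>)
    qed simp
    then show ?thesis by (simp add: prob_space)
  qed
  have "(\<integral>\<omega>. (S (Suc N) \<omega> - S n \<omega>)^2 \<partial>M)
      = (\<integral>\<omega>. (S N \<omega> - S n \<omega>)^2 \<partial>M) + 2 * (\<integral>\<omega>. (S N \<omega> - S n \<omega>) * x N \<omega> \<partial>M) + (\<integral>\<omega>. (x N \<omega>)^2 \<partial>M)"
    unfolding eq using i1 i2 i3 by simp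
  also have "\<dots> \<le> (\<Sum>k\<in>{n..<N}. (c k)^2) + (c N)^2" using step.IH o x2 by simp
  also have "\<dots> = (\<Sum>k\<in>{n..<Suc N}. (c k)^2)" using step.hyps by simp
  finally show ?case .
qed


lemma S_diff_sum: "j \<le> N \<Longrightarrow> S N \<omega> - S j \<omega> = (\<Sum>l\<in>{j..<N}. x l \<omega>)"
  unfolding S_def by (metis add_diff_cancel_left' atLeast0LessThan le_add_diff_inverse sum.atLeastLessThan_concat zero_le)

lemma maximal:
  assumes nN: "n \<le> N" and e: "\<epsilon> > 0"
  shows "\<epsilon>^2 * measure M {\<omega>\<in>space M. \<exists>j\<in>{n..N}. \<epsilon> < \<bar>S j \<omega> - S n \<omega>\<bar>} \<le> (\<Sum>k\<in>{n..<N}. (c k)^2)"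
proof -
  define A where "A j = {\<omega>\<in>space M. \<epsilon> < \<bar>S j \<omega> - S n \<omega>\<bar>} \<inter> (\<Inter>i\<in>{n..<j}. {\<omega>\<in>space M. \<bar>S i \<omega> - S n \<omega>\<bar> \<le> \<epsilon>})" for j
  let ?K = "\<lambda>j. (\<Sum>k<j. c k) + (\<Sum>k<n. c k)"
  have spF: "space (F j) = space M" for j using sub[of j] by (simp add: subalgebra_def)
  have AF: "A j \<in> sets (F j)" if "n \<le> j" for j
  proof -
    have b: "{\<omega>\<in>space M. \<epsilon> < \<bar>S j \<omega> - S n \<omega>\<bar>} \<in> sets (F j)"
    proof -
      have [measurable]: "S j \<in> borel_measurable (F j)" "S n \<in> borel_measurable (F j)"
        using SF_le[of j j] SF_le[of n j] that by auto
      have "{\<omega>\<in>space (F j). \<epsilon> < \<bar>S j \<omega> - S n \<omega>\<bar>} \<in> sets (F j)" by measurable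
      then show ?thesis by (simp add: spF)
    qed
    have i: "{\<omega>\<in>space M. \<bar>S i \<omega> - S n \<omega>\<bar> \<le> \<epsilon>} \<in> sets (F j)" if "i \<in> {n..<j}" for i
    proof -
      have [measurable]: "S i \<in> borel_measurable (F j)" "S n \<in> borel_measurable (F j)"
        using SF_le[of i j] SF_le[of n j] that by auto
      have "{\<omega>\<in>space (F j). \<bar>S i \<omega> - S n \<omega>\<bar> \<le> \<epsilon>} \<in> sets (F j)" by measurable
      then show ?thesis by (simp add: spF)
    qed
    show ?thesis
    proof (cases "{n..<j} = {}")
      case True then show ?thesis using b unfolding A_def by simp
    next
      case False
      have "(\<Inter>i\<in>{n..<j}. {\<omega>\<in>space M. \<bar>S i \<omega> - S n \<omega>\<bar> \<le> \<epsilon>}) \<in> sets (F j)"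
        using i False by (intro sets.finite_INT) auto
      then show ?thesis using b unfolding A_def by auto
    qed
  qed
  have AM: "A j \<in> sets M" if "n \<le> j" for j using AF[OF that] sub[of j] by (auto simp: subalgebra_def)
  have dj: "A j \<inter> A j' = {}" if "n \<le> j" "j < j'" for j j'
  proof (rule ccontr)
    assume "A j \<inter> A j' \<noteq> {}"
    then obtain \<omega> where w: "\<omega> \<in> A j" "\<omega> \<in> A j'" by blast
    from w(1) have 1: "\<epsilon> < \<bar>S j \<omega> - S n \<omega>\<bar>" unfolding A_def by blast
    from w(2) have "\<omega> \<in> (\<Inter>i\<in>{n..<j'}. {\<omega>\<in>space M. \<bar>S i \<omega> - S n \<omega>\<bar> \<le> \<epsilon>})"
      unfolding A_def by blast
    moreover have "j \<in> {n..<j'}" using that by simp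
    ultimately have "\<bar>S j \<omega> - S n \<omega>\<bar> \<le> \<epsilon>" by blast
    with 1 show False by simp
  qed
  have disj: "disjoint_family_on A {n..N}"
    unfolding disjoint_family_on_def
  proof (intro ballI impI)
    fix j j' assume jj: "j \<in> {n..N}" "j' \<in> {n..N}" "j \<noteq> j'"
    show "A j \<inter> A j' = {}"
    proof (cases "j < j'")
      case True then show ?thesis using jj dj by simp
    next
      case False then have "j' < j" using jj by simp
      then show ?thesis using jj dj[of j' j] by (simp add: Int_commute)
    qed
  qed
  have cover: "{\<omega>\<in>space M. \<exists>j\<in>{n..N}. \<epsilon> < \<bar>S j \<omega> - S n \<omega>\<bar>} \<subseteq> (\<Union>j\<in>{n..N}. A j)"
  proof
    fix \<omega> assume "\<omega> \<in> {\<omega>\<in>space M. \<exists>j\<in>{n..N}. \<epsilon> < \<bar>S j \<omega> - S n \<omega>\<bar>}"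
    then obtain j where j: "j \<in> {n..N}" "\<epsilon> < \<bar>S j \<omega> - S n \<omega>\<bar>" and sp: "\<omega> \<in> space M" by auto
    define j0 where "j0 = (LEAST j. j \<in> {n..N} \<and> \<epsilon> < \<bar>S j \<omega> - S n \<omega>\<bar>)"
    have j0: "j0 \<in> {n..N} \<and> \<epsilon> < \<bar>S j0 \<omega> - S n \<omega>\<bar>"
      unfolding j0_def by (rule LeastI[of _ j]) (use j in auto)
    have min: "\<bar>S i \<omega> - S n \<omega>\<bar> \<le> \<epsilon>" if "i \<in> {n..<j0}" for i
    proof (rule ccontr)
      assume "\<not> ?thesis"
      then have "j0 \<le> i" unfolding j0_def using that j0
        by (intro Least_le) auto
      then show False using that by simp
    qed
    have "\<omega> \<in> A j0" unfolding A_def using sp j0 min by auto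
    then show "\<omega> \<in> (\<Union>j\<in>{n..N}. A j)" using j0 by auto
  qed
  have Sdb: "AE \<omega> in M. \<bar>S N \<omega> - S n \<omega>\<bar> \<le> ?K N" using Sdiff_bound by eventually_elim simp
  have key: "\<epsilon>^2 * measure M (A j) \<le> (\<integral>\<omega>. (S N \<omega> - S n \<omega>)^2 * indicator (A j) \<omega> \<partial>M)"
    if j: "j \<in> {n..N}" for j
  proof -
    define Y where "Y \<omega> = (S j \<omega> - S n \<omega>) * indicator (A j) \<omega>" for \<omega>
    have AFj[measurable]: "A j \<in> sets (F j)" using AF j by simp
    have AMj[measurable]: "A j \<in> sets M" using AM j by simp
    have YF: "Y \<in> borel_measurable (F l)" if "j \<le> l" for l
    proof (rule meas_up[OF _ that])
      have [measurable]: "S j \<in> borel_measurable (F j)" "S n \<in> borel_measurable (F j)"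
        using SF_le[of j j] SF_le[of n j] j by auto
      show "Y \<in> borel_measurable (F j)" unfolding Y_def by measurable
    qed
    have YM[measurable]: "Y \<in> borel_measurable M" using meas_M[OF YF[of j]] by simp
    have Yb: "AE \<omega> in M. \<bar>Y \<omega>\<bar> \<le> ?K j"
      using Sdiff_bound
    proof eventually_elim
      case (elim \<omega>)
      have "\<bar>S j \<omega> - S n \<omega>\<bar> \<le> ?K j" using elim by blast
      moreover have "0 \<le> ?K j" using c0 by (simp add: sum_nonneg add_nonneg_nonneg)
      ultimately show ?case by (simp add: Y_def abs_mult indicator_def)
    qed
    have zero: "(\<integral>\<omega>. Y \<omega> * (S N \<omega> - S j \<omega>) \<partial>M) = 0"
    proof -
      have "(\<integral>\<omega>. Y \<omega> * (S N \<omega> - S j \<omega>) \<partial>M) = (\<integral>\<omega>. (\<Sum>l\<in>{j..<N}. Y \<omega> * x l \<omega>) \<partial>M)"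
        using j by (simp add: S_diff_sum sum_distrib_left)
      also have "\<dots> = (\<Sum>l\<in>{j..<N}. (\<integral>\<omega>. Y \<omega> * x l \<omega> \<partial>M))"
      proof (rule Bochner_Integration.integral_sum[where f="\<lambda>l \<omega>. Y \<omega> * x l \<omega>"])
        fix l assume "l \<in> {j..<N}"
        show "integrable M (\<lambda>\<omega>. Y \<omega> * x l \<omega>)"
        proof (rule bint)
          show "AE \<omega> in M. \<bar>Y \<omega> * x l \<omega>\<bar> \<le> ?K j * c l"
            using Yb xb[of l] by eventually_elim (simp add: abs_mult mult_mono)
        qed measurable
      qed
      also have "\<dots> = 0"
      proof (rule sum.neutral, rule ballI)
        fix l assume "l \<in> {j..<N}"
        then show "(\<integral>\<omega>. Y \<omega> * x l \<omega> \<partial>M) = 0" by (intro orth[OF YF Yb]) auto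
      qed
      finally show ?thesis .
    qed
    have pw: "\<epsilon>^2 * indicator (A j) \<omega> + 2 * (Y \<omega> * (S N \<omega> - S j \<omega>)) \<le> (S N \<omega> - S n \<omega>)^2 * indicator (A j) \<omega>" for \<omega>
    proof (cases "\<omega> \<in> A j")
      case True
      then have g: "\<epsilon> < \<bar>S j \<omega> - S n \<omega>\<bar>" unfolding A_def by auto
      have "\<epsilon>^2 \<le> \<bar>S j \<omega> - S n \<omega>\<bar>^2" using g e by (intro power_mono) auto
      moreover have "(S N \<omega> - S n \<omega>)^2 = (S j \<omega> - S n \<omega>)^2 + 2 * ((S j \<omega> - S n \<omega>) * (S N \<omega> - S j \<omega>)) + (S N \<omega> - S j \<omega>)^2"
        by (simp add: power2_eq_square algebra_simps)
      ultimately show ?thesis using True unfolding Y_def by simp (meson add_increasing2 zero_le_power2)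
    next
      case False then show ?thesis unfolding Y_def by simp
    qed
    have iA: "integrable M (\<lambda>\<omega>. \<epsilon>^2 * indicator (A j) \<omega>)"
    proof (intro integrable_mult_right bint)
      show "AE \<omega> in M. \<bar>indicator (A j) \<omega> :: real\<bar> \<le> 1" by (simp add: indicator_def)
    qed (simp add: AMj)
    have iY: "integrable M (\<lambda>\<omega>. 2 * (Y \<omega> * (S N \<omega> - S j \<omega>)))"
    proof (intro integrable_mult_right bint)
      show "AE \<omega> in M. \<bar>Y \<omega> * (S N \<omega> - S j \<omega>)\<bar> \<le> ?K j * ((\<Sum>k<N. c k) + (\<Sum>k<j. c k))"
        using Yb Sdiff_bound
      proof eventually_elim
        case (elim \<omega>)
        have "\<bar>S N \<omega> - S j \<omega>\<bar> \<le> (\<Sum>k<N. c k) + (\<Sum>k<j. c k)" using elim(2) by blast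
        moreover have "0 \<le> (\<Sum>k<N. c k) + (\<Sum>k<j. c k)" using c0 by (simp add: sum_nonneg add_nonneg_nonneg)
        ultimately show ?case using elim(1) by (simp add: abs_mult mult_mono')
      qed
    qed measurable
    have iS: "integrable M (\<lambda>\<omega>. (S N \<omega> - S n \<omega>)^2 * indicator (A j) \<omega>)"
    proof (rule bint)
      show "AE \<omega> in M. \<bar>(S N \<omega> - S n \<omega>)^2 * indicator (A j) \<omega>\<bar> \<le> (?K N)^2"
        using Sdb
      proof eventually_elim
        case (elim \<omega>)
        have "\<bar>S N \<omega> - S n \<omega>\<bar>^2 \<le> (?K N)^2" using elim by (intro power_mono) auto
        then show ?case by (simp add: abs_mult indicator_def)
      qed
    qed measurable
    have "\<epsilon>^2 * measure M (A j) = (\<integral>\<omega>. \<epsilon>^2 * indicator (A j) \<omega> + 2 * (Y \<omega> * (S N \<omega> - S j \<omega>)) \<partial>M)"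
      using iA iY zero by (simp add: AMj)
    also have "\<dots> \<le> (\<integral>\<omega>. (S N \<omega> - S n \<omega>)^2 * indicator (A j) \<omega> \<partial>M)"
      by (rule integral_mono[OF _ iS pw]) (use iA iY in simp)
    finally show ?thesis .
  qed
  have i2: "integrable M (\<lambda>\<omega>. (S N \<omega> - S n \<omega>)^2)"
  proof (rule bint)
    show "AE \<omega> in M. \<bar>(S N \<omega> - S n \<omega>)^2\<bar> \<le> (?K N)^2"
      using Sdb
    proof eventually_elim
      case (elim \<omega>)
      have "\<bar>S N \<omega> - S n \<omega>\<bar>^2 \<le> (?K N)^2" using elim by (intro power_mono) auto
      then show ?case by simp
    qed
  qed measurable
  have "\<epsilon>^2 * measure M {\<omega>\<in>space M. \<exists>j\<in>{n..N}. \<epsilon> < \<bar>S j \<omega> - S n \<omega>\<bar>} \<le> \<epsilon>^2 * measure M (\<Union>j\<in>{n..N}. A j)"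
    using cover AM by (intro mult_left_mono finite_measure_mono) auto
  also have "\<dots> \<le> \<epsilon>^2 * (\<Sum>j\<in>{n..N}. measure M (A j))"
    using AM by (intro mult_left_mono measure_UNION_le) auto
  also have "\<dots> = (\<Sum>j\<in>{n..N}. \<epsilon>^2 * measure M (A j))" by (simp add: sum_distrib_left)
  also have "\<dots> \<le> (\<Sum>j\<in>{n..N}. (\<integral>\<omega>. (S N \<omega> - S n \<omega>)^2 * indicator (A j) \<omega> \<partial>M))"
    using key by (intro sum_mono) auto
  also have "\<dots> = (\<integral>\<omega>. (S N \<omega> - S n \<omega>)^2 * indicator (\<Union>j\<in>{n..N}. A j) \<omega> \<partial>M)"
  proof -
    have "(\<Sum>j\<in>{n..N}. (\<integral>\<omega>. (S N \<omega> - S n \<omega>)^2 * indicator (A j) \<omega> \<partial>M))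
        = (\<integral>\<omega>. (\<Sum>j\<in>{n..N}. (S N \<omega> - S n \<omega>)^2 * indicator (A j) \<omega>) \<partial>M)"
    proof (rule Bochner_Integration.integral_sum[where f="\<lambda>j \<omega>. (S N \<omega> - S n \<omega>)^2 * indicator (A j) \<omega>", symmetric])
      fix j assume "j \<in> {n..N}"
      then have [measurable]: "A j \<in> sets M" using AM by simp
      show "integrable M (\<lambda>\<omega>. (S N \<omega> - S n \<omega>)^2 * indicator (A j) \<omega>)"
        by (rule integrable_real_mult_indicator) (use i2 in auto)
    qed
    also have "\<dots> = (\<integral>\<omega>. (S N \<omega> - S n \<omega>)^2 * indicator (\<Union>j\<in>{n..N}. A j) \<omega> \<partial>M)"
      by (simp add: sum_distrib_left[symmetric] indicator_UN_disjoint[OF _ disj])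
    finally show ?thesis .
  qed
  also have "\<dots> \<le> (\<integral>\<omega>. (S N \<omega> - S n \<omega>)^2 \<partial>M)"
  proof (rule integral_mono[OF _ i2])
    have [measurable]: "(\<Union>j\<in>{n..N}. A j) \<in> sets M" using AM by auto
    show "integrable M (\<lambda>\<omega>. (S N \<omega> - S n \<omega>)^2 * indicator (\<Union>j\<in>{n..N}. A j) \<omega>)"
      by (rule integrable_real_mult_indicator) (use i2 in auto)
    fix \<omega> show "(S N \<omega> - S n \<omega>)^2 * indicator (\<Union>j\<in>{n..N}. A j) \<omega> \<le> (S N \<omega> - S n \<omega>)^2"
      by (simp add: indicator_def)
  qed
  also have "\<dots> \<le> (\<Sum>k\<in>{n..<N}. (c k)^2)" by (rule sq[OF nN])
  finally show ?thesis .
qed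


lemma conv_ae:
  assumes cs: "summable (\<lambda>k. (c k)^2)"
  shows "AE \<omega> in M. convergent (\<lambda>n. S n \<omega>)"
proof -
  define T where "T n = (\<Sum>k. (c (k + n))^2)" for n
  have T0: "T \<longlonglongrightarrow> 0" unfolding T_def by (rule suminf_exist_split2[OF cs])
  have Tb: "(\<Sum>k\<in>{n..<N}. (c k)^2) \<le> T n" if "n \<le> N" for n N
  proof -
    have "(\<Sum>k\<in>{n..<N}. (c k)^2) = (\<Sum>k\<in>{0..<N-n}. (c (k + n))^2)"
      using sum.shift_bounds_nat_ivl[of "\<lambda>k. (c k)^2" 0 n "N - n"] that by simp
    also have "\<dots> \<le> T n" unfolding T_def
      by (rule sum_le_suminf) (use cs summable_iff_shift[of "\<lambda>k. (c k)^2" n] in auto)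
    finally show ?thesis .
  qed
  have bad0: "AE \<omega> in M. \<not> (\<forall>n. \<exists>j\<ge>n. \<epsilon> < \<bar>S j \<omega> - S n \<omega>\<bar>)" if e: "\<epsilon> > 0" for \<epsilon>
  proof -
    define Bad where "Bad = {\<omega>\<in>space M. \<forall>n. \<exists>j\<ge>n. \<epsilon> < \<bar>S j \<omega> - S n \<omega>\<bar>}"
    have BadM: "Bad \<in> sets M" unfolding Bad_def by measurable
    define E where "E n N = {\<omega>\<in>space M. \<exists>j\<in>{n..N + n}. \<epsilon> < \<bar>S j \<omega> - S n \<omega>\<bar>}" for n N
    have EM: "E n N \<in> sets M" for n N
    proof -
      have "E n N = (\<Union>j\<in>{n..N + n}. {\<omega>\<in>space M. \<epsilon> < \<bar>S j \<omega> - S n \<omega>\<bar>})" unfolding E_def by blast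
      also have "\<dots> \<in> sets M" by (intro sets.finite_UN) auto
      finally show ?thesis .
    qed
    have Einc: "incseq (E n)" for n
      unfolding incseq_def
    proof (intro allI impI subsetI)
      fix m m' \<omega> assume mm: "m \<le> m'" and w: "\<omega> \<in> E n m"
      then obtain j where "j \<in> {n..m + n}" "\<epsilon> < \<bar>S j \<omega> - S n \<omega>\<bar>" "\<omega> \<in> space M"
        unfolding E_def by blast
      moreover have "j \<in> {n..m' + n}" using calculation(1) mm by simp
      ultimately show "\<omega> \<in> E n m'" unfolding E_def by blast
    qed
    have e2: "\<epsilon>^2 > 0" using e by simp
    have Eb: "measure M (E n N) \<le> T n / \<epsilon>^2" for n N
    proof -
      have "\<epsilon>^2 * measure M (E n N) \<le> (\<Sum>k\<in>{n..<N + n}. (c k)^2)"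
        unfolding E_def by (rule maximal) (use e in simp_all)
      then have "\<epsilon>^2 * measure M (E n N) \<le> T n" using Tb[of n "N + n"] by linarith
      then have "measure M (E n N) * \<epsilon>^2 \<le> T n" by (simp add: mult.commute)
      then show ?thesis using e2 by (simp add: pos_le_divide_eq)
    qed
    have BadE: "measure M Bad \<le> T n / \<epsilon>^2" for n
    proof -
      have rng: "range (E n) \<subseteq> sets M" using EM by blast
      have lim: "(\<lambda>N. measure M (E n N)) \<longlonglongrightarrow> measure M (\<Union>N. E n N)"
        by (rule finite_Lim_measure_incseq[OF rng Einc])
      have "measure M (\<Union>N. E n N) \<le> T n / \<epsilon>^2"
        by (rule LIMSEQ_le_const2[OF lim]) (use Eb in blast)
      moreover have sub: "Bad \<subseteq> (\<Union>N. E n N)"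
      proof
        fix \<omega> assume "\<omega> \<in> Bad"
        then obtain j where j: "j \<ge> n" "\<epsilon> < \<bar>S j \<omega> - S n \<omega>\<bar>" "\<omega> \<in> space M" unfolding Bad_def by blast
        have "j \<in> {n..(j - n) + n}" using j(1) by simp
        then have "\<omega> \<in> E n (j - n)" unfolding E_def using j by blast
        then show "\<omega> \<in> (\<Union>N. E n N)" by blast
      qed
      moreover have "(\<Union>N. E n N) \<in> sets M" using rng by blast
      ultimately show ?thesis using finite_measure_mono[OF sub] by linarith
    qed
    have lim0: "(\<lambda>n. T n / \<epsilon>^2) \<longlonglongrightarrow> 0" by (rule tendsto_divide_zero[OF T0])
    have "measure M Bad \<le> 0" by (rule LIMSEQ_le_const[OF lim0]) (use BadE in blast)
    then have "measure M Bad = 0" using measure_nonneg[of M Bad] by linarith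
    then have em: "emeasure M Bad = 0" using emeasure_eq_measure[of Bad] by simp
    have "(AE \<omega> in M. \<not> (\<forall>n. \<exists>j\<ge>n. \<epsilon> < \<bar>S j \<omega> - S n \<omega>\<bar>)) \<longleftrightarrow> emeasure M Bad = 0"
      by (rule AE_iff_measurable[OF BadM]) (unfold Bad_def, simp)
    then show ?thesis using em by simp
  qed
  have "AE \<omega> in M. \<forall>r. \<not> (\<forall>n. \<exists>j\<ge>n. inverse (real (Suc r)) / 3 < \<bar>S j \<omega> - S n \<omega>\<bar>)"
    unfolding AE_all_countable by (intro allI bad0) simp
  then show ?thesis
  proof eventually_elim
    case (elim \<omega>)
    have "Cauchy (\<lambda>n. S n \<omega>)" unfolding Cauchy_iff2
    proof
      fix r
      define \<delta> where "\<delta> = inverse (real (Suc r)) / 3"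
      have \<delta>: "0 < \<delta>" unfolding \<delta>_def by simp
      have "\<not> (\<forall>n. \<exists>j\<ge>n. \<delta> < \<bar>S j \<omega> - S n \<omega>\<bar>)" using elim unfolding \<delta>_def by blast
      then obtain n where n0: "\<forall>j\<ge>n. \<not> \<delta> < \<bar>S j \<omega> - S n \<omega>\<bar>" by blast
      have n: "\<bar>S j \<omega> - S n \<omega>\<bar> \<le> \<delta>" if "j \<ge> n" for j using n0 that by (simp add: not_less)
      have "\<bar>S m \<omega> - S m' \<omega>\<bar> < inverse (real (Suc r))" if "m \<ge> n" "m' \<ge> n" for m m'
      proof -
        have "\<bar>S m \<omega> - S m' \<omega>\<bar> \<le> \<bar>S m \<omega> - S n \<omega>\<bar> + \<bar>S m' \<omega> - S n \<omega>\<bar>" by arith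
        also have "\<dots> \<le> 2 * \<delta>" using n[OF that(1)] n[OF that(2)] by simp
        also have "\<dots> < inverse (real (Suc r))" using \<delta> unfolding \<delta>_def by simp
        finally show ?thesis .
      qed
      then show "\<exists>M. \<forall>m\<ge>M. \<forall>n\<ge>M. \<bar>S m \<omega> - S n \<omega>\<bar> < inverse (real (Suc r))" by blast
    qed
    then show ?case by (simp add: Cauchy_convergent_iff)
  qed
qed

end

lemma mart_conv:
  fixes M :: "'w measure" and F :: "nat \<Rightarrow> 'w measure" and x :: "nat \<Rightarrow> 'w \<Rightarrow> real" and c :: "nat \<Rightarrow> real"
  assumes "prob_space M" "\<And>k. subalgebra M (F k)" "\<And>k. subalgebra (F (Suc k)) (F k)"
    "\<And>k. x k \<in> borel_measurable (F (Suc k))"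
    "\<And>k. AE \<omega> in M. \<bar>x k \<omega>\<bar> \<le> c k"
    "\<And>k. AE \<omega> in M. real_cond_exp M (F k) (x k) \<omega> = 0"
    "summable (\<lambda>k. (c k)^2)"
  shows "AE \<omega> in M. convergent (\<lambda>n. \<Sum>k<n. x k \<omega>)"
proof -
  interpret mart M F x c by (rule mart.intro; (rule assms)?) (unfold_locales; rule assms)
  show ?thesis using conv_ae[OF assms(7)] unfolding S_def .
qed


theorem theorem1:
  fixes P :: "'s::finite \<Rightarrow> 'a::finite \<Rightarrow> 's \<Rightarrow> real"
    and g :: "'s \<Rightarrow> 'a \<Rightarrow> real" and \<alpha> :: real
    and m H :: nat and V0 :: "'s \<Rightarrow> real" and \<gamma> :: "nat \<Rightarrow> real"
    and p :: "'s \<Rightarrow> real" and C :: real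
    and M :: "'w measure" and F :: "nat \<Rightarrow> 'w measure"
    and V :: "nat \<Rightarrow> 'w \<Rightarrow> 's \<Rightarrow> real"
    and \<mu> :: "nat \<Rightarrow> 'w \<Rightarrow> 's \<Rightarrow> 'a"
    and traj :: "nat \<Rightarrow> 'w \<Rightarrow> nat \<Rightarrow> 's"
    and L :: "nat \<Rightarrow> 'w \<Rightarrow> nat"
    and D :: "nat \<Rightarrow> 'w \<Rightarrow> 's set"
    and w :: "nat \<Rightarrow> 's \<Rightarrow> 'w \<Rightarrow> real"
  assumes mdp: "mdp P g \<alpha>"
    and m: "m \<ge> 1" and H: "H \<ge> 1"
    and step: "\<And>k. 0 < \<gamma> k \<and> \<gamma> k \<le> 1"
    and p_distr: "\<And>i. p i > 0" "(\<Sum>i\<in>UNIV. p i) = 1"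
    and cond_b: "\<alpha> ^ (H - 1) + 2 * (1 + \<alpha> ^ m) * (\<alpha> ^ (H - 1) / (1 - \<alpha>)) < 1"
    and step_div: "\<not> summable \<gamma>"
    and step_sq: "summable (\<lambda>k. (\<gamma> k)\<^sup>2)"
    and prob: "prob_space M"
    and filt_sub: "\<And>k. subalgebra M (F k)"
    and filt_mono: "\<And>k. subalgebra (F (Suc k)) (F k)"
    and V_init: "\<And>\<omega>. V 0 \<omega> = V0"
    and greedy: "\<And>k \<omega>. Tmu P g \<alpha> (\<mu> (Suc k) \<omega>) ((Tbell P g \<alpha> ^^ (H - 1)) (V k \<omega>))
                       = (Tbell P g \<alpha> ^^ H) (V k \<omega>)"
    and \<mu>_meas: "\<And>k. \<mu> (Suc k) \<in> measurable (F k) (count_space UNIV)"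
    and traj_meas: "\<And>k n. (\<lambda>\<omega>. traj k \<omega> n) \<in> measurable (F (Suc k)) (count_space UNIV)"
    and L_meas: "\<And>k. L k \<in> measurable (F (Suc k)) (count_space UNIV)"
    and w_meas: "\<And>k i. w k i \<in> borel_measurable (F (Suc k))"
    and traj_law: "\<And>k n (xs :: nat \<Rightarrow> 's). AE \<omega> in M.
         real_cond_exp M (F k) (indicator {\<omega>. \<forall>j\<le>n. traj k \<omega> j = xs j}) \<omega>
           = p (xs 0) * (\<Prod>j<n. P (xs j) (\<mu> (Suc k) \<omega> (xs j)) (xs (Suc j)))"
    and D_def: "\<And>k \<omega>. D k \<omega> = traj k \<omega> ` {..L k \<omega>}"
    and update: "\<And>k \<omega> i. V (Suc k) \<omega> i =
         (if i \<in> D k \<omega>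
          then (1 - \<gamma> k) * V k \<omega> i
               + \<gamma> k * ((Tmu P g \<alpha> (\<mu> (Suc k) \<omega>) ^^ m) ((Tbell P g \<alpha> ^^ (H - 1)) (V k \<omega>)) i
                         + w k i \<omega>)
          else V k \<omega> i)"
    and noise_mean: "\<And>k i. AE \<omega> in M.
         real_cond_exp M (F k) (\<lambda>\<omega>. indicator {\<omega>. i \<in> D k \<omega>} \<omega> * w k i \<omega>) \<omega> = 0"
    and noise_bound: "\<And>k i. AE \<omega> in M. i \<in> D k \<omega> \<longrightarrow> \<bar>w k i \<omega>\<bar> \<le> C"
  shows "AE \<omega> in M. \<forall>i. (\<lambda>k. V k \<omega> i) \<longlonglongrightarrow> Jstar P g \<alpha> i"
proof -
  interpret P: prob_space M by (rule prob)
  have sfs: "sigma_finite_subalgebra M (F k)" for k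
    by (rule finite_measure_subalgebra_is_sigma_finite)
       (simp add: finite_measure_subalgebra_def finite_measure_subalgebra_axioms_def P.finite_measure_axioms filt_sub)
  have a: "0 < \<alpha>" "\<alpha> < 1" using mdp by (auto simp: mdp_def)
  define J where "J = Jstar P g \<alpha>"
  define \<beta> where "\<beta> = 2 * \<alpha> ^ H / (1 - \<alpha>)"
  have \<beta>: "0 \<le> \<beta>" "\<beta> < 1"
  proof -
    define t where "t = \<alpha> ^ (H - 1) / (1 - \<alpha>)"
    have t0: "0 \<le> t" unfolding t_def using a by simp
    have HS: "\<alpha> ^ H = \<alpha> * \<alpha> ^ (H - 1)" using H by (metis Suc_diff_le diff_Suc_1 power_Suc)
    have bt: "\<beta> = 2 * \<alpha> * t" unfolding \<beta>_def t_def HS by simp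
    have am: "0 < \<alpha> ^ m" using a by simp
    have aH: "0 < \<alpha> ^ (H - 1)" using a by simp
    have "\<alpha> ^ (H - 1) + 2 * (1 + \<alpha> ^ m) * t < 1" using cond_b unfolding t_def .
    moreover have "2 * \<alpha> * t \<le> 2 * (1 + \<alpha> ^ m) * t"
    proof -
      have "2 * \<alpha> \<le> 2 * (1 + \<alpha> ^ m)" using a am by (smt (verit))
      then show ?thesis using t0 by (rule mult_right_mono)
    qed
    ultimately show "\<beta> < 1" unfolding bt using aH by linarith
    show "0 \<le> \<beta>" unfolding bt using a t0 by simp
  qed
  have spF: "space (F k) = space M" for k using filt_sub[of k] by (simp add: subalgebra_def)
  define ind where "ind k i \<omega> = (indicator {\<omega>. i \<in> D k \<omega>} \<omega> :: real)" for k i \<omega>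
  have ind_meas: "ind k i \<in> borel_measurable (F (Suc k))" for k i
  proof -
    have [measurable]: "L k \<in> measurable (F (Suc k)) (count_space UNIV)" by (rule L_meas)
    have [measurable]: "(\<lambda>\<omega>. traj k \<omega> j) \<in> measurable (F (Suc k)) (count_space UNIV)" for j by (rule traj_meas)
    have "ind k i = (\<lambda>\<omega>. if \<exists>j. j \<le> L k \<omega> \<and> traj k \<omega> j = i then 1 else 0)"
      unfolding ind_def D_def by (auto simp: indicator_def fun_eq_iff)
    also have "\<dots> \<in> borel_measurable (F (Suc k))" by measurable
    finally show ?thesis .
  qed
  have indM: "ind k i \<in> borel_measurable M" for k i using measurable_from_subalg[OF filt_sub ind_meas] .
  have ind01: "ind k i \<omega> = 0 \<or> ind k i \<omega> = 1" for k i \<omega> unfolding ind_def by (simp add: indicator_def)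
  have wM: "w k i \<in> borel_measurable M" for k i using measurable_from_subalg[OF filt_sub w_meas] .

  have filt_meas: "f \<in> borel_measurable (F k) \<Longrightarrow> f \<in> borel_measurable (F (Suc k))" for f k
    using measurable_from_subalg[OF filt_mono] by blast
  have noise_conv: "AE \<omega> in M. convergent (\<lambda>n. \<Sum>k<n. \<gamma> k * (ind k i \<omega> * w k i \<omega>))" for i
  proof (rule mart_conv[where M=M and F=F and x="\<lambda>k \<omega>. \<gamma> k * (ind k i \<omega> * w k i \<omega>)" and c="\<lambda>k. \<gamma> k * \<bar>C\<bar>", OF prob filt_sub filt_mono])
    fix k
    have [measurable]: "ind k i \<in> borel_measurable (F (Suc k))" "w k i \<in> borel_measurable (F (Suc k))"
      using ind_meas w_meas by auto
    show "(\<lambda>\<omega>. \<gamma> k * (ind k i \<omega> * w k i \<omega>)) \<in> borel_measurable (F (Suc k))" by measurable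
    have bnd: "AE \<omega> in M. \<bar>ind k i \<omega> * w k i \<omega>\<bar> \<le> \<bar>C\<bar>"
      using noise_bound[where k=k and i=i] by eventually_elim (auto simp: ind_def indicator_def)
    then show "AE \<omega> in M. \<bar>\<gamma> k * (ind k i \<omega> * w k i \<omega>)\<bar> \<le> \<gamma> k * \<bar>C\<bar>"
      by eventually_elim (use step[of k] in \<open>simp add: abs_mult mult_left_mono\<close>)
    have int: "integrable M (\<lambda>\<omega>. ind k i \<omega> * w k i \<omega>)"
      by (rule P.integrable_const_bound[where B="\<bar>C\<bar>"]) (use bnd indM wM in auto)
    interpret sfs: sigma_finite_subalgebra M "F k" by (rule sfs)
    show "AE \<omega> in M. real_cond_exp M (F k) (\<lambda>\<omega>. \<gamma> k * (ind k i \<omega> * w k i \<omega>)) \<omega> = 0"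
      using sfs.real_cond_exp_cmult[OF int, of "\<gamma> k"] noise_mean[where k=k and i=i]
      by eventually_elim (simp add: ind_def)
  next
    show "summable (\<lambda>k. (\<gamma> k * \<bar>C\<bar>)^2)"
      using summable_mult2[OF step_sq, of "C^2"] by (simp add: power_mult_distrib)
  qed
  define q where "q k i = real_cond_exp M (F k) (ind k i)" for k i
  have intind: "integrable M (ind k i)" for k i
    by (rule P.integrable_const_bound[where B=1]) (use indM ind01 in \<open>auto simp: ind_def indicator_def\<close>)
  have qF: "q k i \<in> borel_measurable (F k)" for k i unfolding q_def by simp
  have q01: "AE \<omega> in M. 0 \<le> q k i \<omega> \<and> q k i \<omega> \<le> 1" for k i
  proof -
    interpret sfs: sigma_finite_subalgebra M "F k" by (rule sfs)
    have "AE \<omega> in M. 0 \<le> q k i \<omega>" unfolding q_def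
      by (rule sfs.real_cond_exp_pos) (use indM in \<open>auto simp: ind_def indicator_def\<close>)
    moreover have "AE \<omega> in M. q k i \<omega> \<le> 1" unfolding q_def
      by (rule sfs.real_cond_exp_le_c[OF intind]) (auto simp: ind_def indicator_def)
    ultimately show ?thesis by eventually_elim simp
  qed
  have visit_conv: "AE \<omega> in M. convergent (\<lambda>n. \<Sum>k<n. \<gamma> k * (ind k i \<omega> - q k i \<omega>))" for i
  proof (rule mart_conv[where M=M and F=F and x="\<lambda>k \<omega>. \<gamma> k * (ind k i \<omega> - q k i \<omega>)" and c="\<lambda>k. \<gamma> k", OF prob filt_sub filt_mono])
    fix k
    have [measurable]: "ind k i \<in> borel_measurable (F (Suc k))" "q k i \<in> borel_measurable (F (Suc k))"
      using ind_meas filt_meas[OF qF] by auto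
    show "(\<lambda>\<omega>. \<gamma> k * (ind k i \<omega> - q k i \<omega>)) \<in> borel_measurable (F (Suc k))" by measurable
    show "AE \<omega> in M. \<bar>\<gamma> k * (ind k i \<omega> - q k i \<omega>)\<bar> \<le> \<gamma> k"
      using q01[of k i]
    proof eventually_elim
      case (elim \<omega>)
      have "\<bar>ind k i \<omega> - q k i \<omega>\<bar> \<le> 1" using elim ind01[of k i \<omega>] by auto
      then show ?case using step[of k] by (simp add: abs_mult mult_left_le)
    qed
    interpret sfs: sigma_finite_subalgebra M "F k" by (rule sfs)
    have intq: "integrable M (q k i)" unfolding q_def by (rule sfs.real_cond_exp_int(1)[OF intind])
    have intd: "integrable M (\<lambda>\<omega>. ind k i \<omega> - q k i \<omega>)" using intind intq by auto
    have qq: "AE \<omega> in M. real_cond_exp M (F k) (q k i) \<omega> = q k i \<omega>"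
      by (rule sfs.real_cond_exp_F_meas[OF intq qF])
    show "AE \<omega> in M. real_cond_exp M (F k) (\<lambda>\<omega>. \<gamma> k * (ind k i \<omega> - q k i \<omega>)) \<omega> = 0"
      using sfs.real_cond_exp_cmult[OF intd, of "\<gamma> k"] sfs.real_cond_exp_diff[OF intind[of k i] intq] qq
      by eventually_elim (simp add: q_def)
  qed (rule step_sq)
  have qlow: "AE \<omega> in M. p i \<le> q k i \<omega>" for k i
  proof -
    interpret sfs: sigma_finite_subalgebra M "F k" by (rule sfs)
    define B where "B = {\<omega>. \<forall>j\<le>(0::nat). traj k \<omega> j = (\<lambda>_. i) j}"
    have Beq: "B = {\<omega>. traj k \<omega> 0 = i}" unfolding B_def by auto
    have [measurable]: "(\<lambda>\<omega>. traj k \<omega> 0) \<in> measurable M (count_space UNIV)"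
      using measurable_from_subalg[OF filt_sub traj_meas] .
    have BM: "(\<lambda>\<omega>. indicator B \<omega> :: real) \<in> borel_measurable M"
    proof -
      have "(\<lambda>\<omega>. indicator B \<omega> :: real) = (\<lambda>\<omega>. if traj k \<omega> 0 = i then 1 else 0)"
        unfolding Beq by (auto simp: indicator_def fun_eq_iff)
      also have "\<dots> \<in> borel_measurable M" by measurable
      finally show ?thesis .
    qed
    have intB: "integrable M (\<lambda>\<omega>. indicator B \<omega> :: real)"
      by (rule P.integrable_const_bound[where B=1]) (use BM in \<open>auto simp: indicator_def\<close>)
    have le: "AE \<omega> in M. indicator B \<omega> \<le> ind k i \<omega>"
    proof (rule AE_I2)
      fix \<omega> show "indicator B \<omega> \<le> ind k i \<omega>"
      proof (cases "\<omega> \<in> B")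
        case True
        then have "i \<in> D k \<omega>" unfolding Beq D_def by (auto intro: image_eqI[where x=0])
        then show ?thesis by (simp add: ind_def)
      next
        case False then show ?thesis using ind01[of k i \<omega>] by (auto simp: indicator_def)
      qed
    qed
    have "AE \<omega> in M. real_cond_exp M (F k) (indicator B) \<omega> \<le> q k i \<omega>"
      unfolding q_def by (rule sfs.real_cond_exp_mono[OF le intB intind])
    moreover have "AE \<omega> in M. real_cond_exp M (F k) (indicator B) \<omega> = p i"
      using traj_law[where k=k and n=0 and xs="\<lambda>_. i"] unfolding B_def by simp
    ultimately show ?thesis by eventually_elim simp
  qed

  have AEi: "AE \<omega> in M. convergent (\<lambda>n. \<Sum>k<n. \<gamma> k * (ind k i \<omega> * w k i \<omega>))
      \<and> convergent (\<lambda>n. \<Sum>k<n. \<gamma> k * (ind k i \<omega> - q k i \<omega>))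
      \<and> (\<forall>k. p i \<le> q k i \<omega>) \<and> (\<forall>k. i \<in> D k \<omega> \<longrightarrow> \<bar>w k i \<omega>\<bar> \<le> C)" for i
  proof -
    have "AE \<omega> in M. \<forall>k. p i \<le> q k i \<omega>" unfolding AE_all_countable using qlow by blast
    moreover have "AE \<omega> in M. \<forall>k. i \<in> D k \<omega> \<longrightarrow> \<bar>w k i \<omega>\<bar> \<le> C"
      unfolding AE_all_countable using noise_bound by blast
    ultimately show ?thesis using noise_conv[of i] visit_conv[of i] by eventually_elim blast
  qed
  have AEall: "AE \<omega> in M. \<forall>i. convergent (\<lambda>n. \<Sum>k<n. \<gamma> k * (ind k i \<omega> * w k i \<omega>))
      \<and> convergent (\<lambda>n. \<Sum>k<n. \<gamma> k * (ind k i \<omega> - q k i \<omega>))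
      \<and> (\<forall>k. p i \<le> q k i \<omega>) \<and> (\<forall>k. i \<in> D k \<omega> \<longrightarrow> \<bar>w k i \<omega>\<bar> \<le> C)"
    unfolding AE_all_countable using AEi by blast
  show ?thesis using AEall
  proof eventually_elim
    case (elim \<omega>)
    define e where "e k i = V k \<omega> i - J i" for k i
    define aa where "aa k i = \<gamma> k * ind k i \<omega>" for k i
    define gg where "gg k i = (Tmu P g \<alpha> (\<mu> (Suc k) \<omega>) ^^ m) ((Tbell P g \<alpha> ^^ (H - 1)) (V k \<omega>)) i - J i" for k i
    define ww where "ww k i = w k i \<omega>" for k i
    have aa01: "0 \<le> aa k i \<and> aa k i \<le> 1" for k i
      using step[of k] ind01[of k i \<omega>] unfolding aa_def by auto
    have conv0: "(\<lambda>k. e k i) \<longlonglongrightarrow> 0" for i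
    proof (rule det_conv[where e=e and a=aa and gg=gg and w=ww and \<beta>=\<beta> and C=C, OF \<beta> aa01])
      fix i
      show "\<not> summable (\<lambda>k. aa k i)"
      proof
        assume sa: "summable (\<lambda>k. aa k i)"
        have a0: "0 \<le> aa k i" for k using aa01 by blast
        have "Bseq (\<lambda>n. \<Sum>k<n. \<gamma> k * (ind k i \<omega> - q k i \<omega>))"
          using elim[rule_format, of i] by (intro convergent_imp_Bseq) blast
        then obtain B where B: "\<And>n. \<bar>\<Sum>k<n. \<gamma> k * (ind k i \<omega> - q k i \<omega>)\<bar> \<le> B"
          unfolding Bseq_def by auto
        have pq: "p i \<le> q k i \<omega>" for k using elim by blast
        have pi: "p i > 0" by (rule p_distr(1))
        have "(\<Sum>k<n. \<gamma> k) \<le> (suminf (\<lambda>k. aa k i) + B) / p i" for n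
        proof -
          have "p i * (\<Sum>k<n. \<gamma> k) = (\<Sum>k<n. \<gamma> k * p i)" by (simp add: sum_distrib_left mult.commute)
          also have "\<dots> \<le> (\<Sum>k<n. \<gamma> k * q k i \<omega>)"
            using step pq by (intro sum_mono mult_left_mono) (auto simp: less_imp_le)
          also have "\<dots> = (\<Sum>k<n. aa k i) - (\<Sum>k<n. \<gamma> k * (ind k i \<omega> - q k i \<omega>))"
            unfolding aa_def by (simp add: sum_subtractf[symmetric] algebra_simps)
          also have "\<dots> \<le> suminf (\<lambda>k. aa k i) + B"
            using sum_le_suminf[OF sa, of "{..<n}"] a0 B[of n] by auto
          finally show ?thesis using pi by (simp add: pos_le_divide_eq mult.commute)
        qed
        then have "summable \<gamma>"
          by (intro summableI_nonneg_bounded[where x="(suminf (\<lambda>k. aa k i) + B) / p i"])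
             (use step in \<open>auto simp: less_imp_le\<close>)
        with step_div show False by simp
      qed
    next
      fix i
      have "convergent (\<lambda>n. \<Sum>k<n. \<gamma> k * (ind k i \<omega> * w k i \<omega>))" using elim by blast
      then show "convergent (\<lambda>n. \<Sum>k<n. aa k i * ww k i)" unfolding aa_def ww_def by (simp add: mult.assoc)
    next
      fix k i
      show "\<bar>aa k i * ww k i\<bar> \<le> aa k i * C"
      proof (cases "i \<in> D k \<omega>")
        case True
        then have "\<bar>w k i \<omega>\<bar> \<le> C" using elim by blast
        then show ?thesis using True step[of k] unfolding aa_def ww_def ind_def
          by (simp add: abs_mult mult_left_mono)
      next
        case False then show ?thesis unfolding aa_def ww_def ind_def by simp
      qed
    next
      fix k i
      show "e (Suc k) i = (1 - aa k i) * e k i + aa k i * (gg k i + ww k i)"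
      proof (cases "i \<in> D k \<omega>")
        case True
        then show ?thesis unfolding e_def aa_def gg_def ww_def ind_def
          using update[where k=k and \<omega>=\<omega> and i=i] by (simp add: algebra_simps)
      next
        case False
        then show ?thesis unfolding e_def aa_def gg_def ww_def ind_def
          using update[where k=k and \<omega>=\<omega> and i=i] by simp
      qed
    next
      fix k d i
      assume d: "\<And>j. \<bar>e k j\<bar> \<le> d"
      have d': "\<And>j. \<bar>V k \<omega> j - Jstar P g \<alpha> j\<bar> \<le> d" using d unfolding e_def J_def .
      show "\<bar>gg k i\<bar> \<le> \<beta> * d"
        unfolding gg_def J_def \<beta>_def
        by (rule G_contr[OF mdp m H greedy[where k=k and \<omega>=\<omega>] d'])
    qed
    show ?case
    proof
      fix i
      show "(\<lambda>k. V k \<omega> i) \<longlonglongrightarrow> Jstar P g \<alpha> i"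
        using conv0[of i] unfolding e_def J_def by (rule LIM_zero_cancel)
    qed
  qed
qed

end
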